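(* Let $s$ be one of $s(x)=\sigma(x)$ (Weierstrass sigma function), $s(x)=\sinh x$, $s(x)=x$, let $f(q,p;\alpha)=\frac{s(q+p+\alpha)s(q-p+\alpha)}{s(q+p-\alpha)s(q-p-\alpha)}$, and let $\gamma$ be a constant; set $\alpha=-2\gamma$, $\beta=\gamma$. Let $q(n_1,n_2;y,z)$ satisfy, for all $y,z$, the lattice equation $$f(q,q_{1,0};\alpha)f(q,q_{-1,0};\alpha)f(q,q_{0,1};\beta)f(q,q_{0,-1};\beta)f(q,q_{-1,-1};\gamma)f(q,q_{1,1};\gamma)=1$$ and the flows $$\frac{q_{,y}+1}{q_{,y}-1}=f(q,q_{-1,0};\alpha)f(q,q_{0,1};\beta)f(q,q_{1,1};\gamma),\qquad \frac{q_{,z}+1}{q_{,z}-1}=f(q,q_{-1,0};\alpha)f(q,q_{0,-1};\beta)f(q,q_{-1,-1};\gamma).$$ Fix an integer $j$ and put $u(2k)=q(k,j)$, $u(2k-1)=q(k,j+1)$. Then $u_{,t}:=\tfrac12(u_{,y}+u_{,z})$ satisfies, at every $n\in\mathbb Z$, $$u_{,t}=\frac{1}{f(u,u_2;2\gamma)f(u,u_1;-\gamma)f(u,u_{-1};-\gamma)-1}-\frac{1}{f(u,u_1;-\gamma)f(u,u_{-1};-\gamma)f(u,u_{-2};2\gamma)-1},$$ where $u=u(n)$, $u_m=u(n+m)$.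
   Context: Notation: $q_{i,j}=q(n_1+i,n_2+j)$; subscripts ${,y},{,z},{,t}$ denote partial derivatives. *)

theory Defs
  imports "HOL-Analysis.Analysis"
begin

definition wE :: "complex \<Rightarrow> complex" where
  "wE u = (1 - u) * exp (u + u^2 / 2)"

text \<open>Weierstrass sigma function of the lattice generated by w1, w2, as the limit of the
  (absolutely convergent) Weierstrass product taken over square shells.\<close>
definition weierstrass_sigma :: "complex \<Rightarrow> complex \<Rightarrow> complex \<Rightarrow> complex" where
  "weierstrass_sigma w1 w2 z =
     lim (\<lambda>N::nat. z * (\<Prod>mn \<in> ({- int N..int N} \<times> {- int N..int N}) - {(0,0)}.
            wE (z / (of_int (fst mn) * w1 + of_int (snd mn) * w2))))"

definition fq :: "(complex \<Rightarrow> complex) \<Rightarrow> complex \<Rightarrow> complex \<Rightarrow> complex \<Rightarrow> complex" where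
  "fq s q p a = s (q + p + a) * s (q - p + a) / (s (q + p - a) * s (q - p - a))"

definition fq_def_ok :: "(complex \<Rightarrow> complex) \<Rightarrow> complex \<Rightarrow> complex \<Rightarrow> complex \<Rightarrow> bool" where
  "fq_def_ok s q p a \<longleftrightarrow> s (q + p - a) \<noteq> 0 \<and> s (q - p - a) \<noteq> 0"

definition qy :: "(int \<Rightarrow> int \<Rightarrow> real \<Rightarrow> real \<Rightarrow> complex) \<Rightarrow> int \<Rightarrow> int \<Rightarrow> real \<Rightarrow> real \<Rightarrow> complex" where
  "qy q n1 n2 y z = vector_derivative (\<lambda>y'. q n1 n2 y' z) (at y)"
definition qz :: "(int \<Rightarrow> int \<Rightarrow> real \<Rightarrow> real \<Rightarrow> complex) \<Rightarrow> int \<Rightarrow> int \<Rightarrow> real \<Rightarrow> real \<Rightarrow> complex" where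
  "qz q n1 n2 y z = vector_derivative (\<lambda>z'. q n1 n2 y z') (at z)"

definition ured :: "(int \<Rightarrow> int \<Rightarrow> real \<Rightarrow> real \<Rightarrow> complex) \<Rightarrow> int \<Rightarrow> int \<Rightarrow> real \<Rightarrow> real \<Rightarrow> complex" where
  "ured q j n y z = (if even n then q (n div 2) j y z else q ((n + 1) div 2) (j + 1) y z)"

end

theory Submission
  imports Defs
begin

lemma fq_neg: "fq s x p (-a) = 1 / fq s x p a"
  unfolding fq_def by (simp add: algebra_simps)

lemma fq_2g: "fq s x p (2*g) = 1 / fq s x p (-2*g)"
  using fq_neg[of s x p "-2*g"] by simp

lemma fq_mg: "fq s x p (-g) = 1 / fq s x p g"
  using fq_neg by simp

lemma alg:
  fixes Qy Qz Fy Fz A B :: complex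
  assumes "Qy \<noteq> 1" "Qz \<noteq> 1" "(Qy+1)/(Qy-1) = Fy" "(Qz+1)/(Qz-1) = Fz"
    "Fy * B = 1" "Fz = A"
  shows "(Qy + Qz)/2 = 1/(A-1) - 1/(B-1)"
proof -
  have y: "Qy + 1 = Fy * (Qy - 1)" using assms(1,3) by (simp add: field_simps)
  have z: "Qz + 1 = Fz * (Qz - 1)" using assms(2,4) by (simp add: field_simps)
  have A1: "A \<noteq> 1" using z assms(6) by auto
  have B1: "B \<noteq> 1" using y assms(5) by auto
  have B0: "B \<noteq> 0" using assms(5) by auto
  have Fy: "Fy = 1/B" using assms(5) B0 by (simp add: field_simps)
  have qy: "Qy = (1 + B)/(1 - B)" using y Fy B0 B1
    by (simp add: field_simps)
  have qz: "Qz = (A + 1)/(A - 1)" using z assms(6) A1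
    by (simp add: field_simps)
  have a: "A - 1 \<noteq> 0" "1 - B \<noteq> 0" "B - 1 \<noteq> 0" using A1 B1 by auto
  show ?thesis using a unfolding qy qz
    by (simp add: divide_simps) (simp add: algebra_simps)
qed

theorem mainTheorem7:
  fixes s :: "complex \<Rightarrow> complex"
    and q :: "int \<Rightarrow> int \<Rightarrow> real \<Rightarrow> real \<Rightarrow> complex"
    and \<gamma> :: complex and j n :: int and y z :: real
  assumes s_choice: "(\<exists>w1 w2. Im (w2 / w1) \<noteq> 0 \<and> s = weierstrass_sigma w1 w2)
                     \<or> s = sinh \<or> s = (\<lambda>x. x)"
    and diff_y: "\<And>n1 n2 y z. (\<lambda>y'. q n1 n2 y' z) differentiable (at y)"
    and diff_z: "\<And>n1 n2 y z. (\<lambda>z'. q n1 n2 y z') differentiable (at z)"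
    and defined: "\<And>n1 n2 y z.
        fq_def_ok s (q n1 n2 y z) (q (n1+1) n2 y z) (-2*\<gamma>) \<and>
        fq_def_ok s (q n1 n2 y z) (q (n1-1) n2 y z) (-2*\<gamma>) \<and>
        fq_def_ok s (q n1 n2 y z) (q n1 (n2+1) y z) \<gamma> \<and>
        fq_def_ok s (q n1 n2 y z) (q n1 (n2-1) y z) \<gamma> \<and>
        fq_def_ok s (q n1 n2 y z) (q (n1-1) (n2-1) y z) \<gamma> \<and>
        fq_def_ok s (q n1 n2 y z) (q (n1+1) (n2+1) y z) \<gamma> \<and>
        qy q n1 n2 y z \<noteq> 1 \<and> qz q n1 n2 y z \<noteq> 1"
    and lattice: "\<And>n1 n2 y z.
        fq s (q n1 n2 y z) (q (n1+1) n2 y z) (-2*\<gamma>) * fq s (q n1 n2 y z) (q (n1-1) n2 y z) (-2*\<gamma>)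
      * fq s (q n1 n2 y z) (q n1 (n2+1) y z) \<gamma> * fq s (q n1 n2 y z) (q n1 (n2-1) y z) \<gamma>
      * fq s (q n1 n2 y z) (q (n1-1) (n2-1) y z) \<gamma> * fq s (q n1 n2 y z) (q (n1+1) (n2+1) y z) \<gamma> = 1"
    and flow_y: "\<And>n1 n2 y z.
        (qy q n1 n2 y z + 1) / (qy q n1 n2 y z - 1) =
        fq s (q n1 n2 y z) (q (n1-1) n2 y z) (-2*\<gamma>) * fq s (q n1 n2 y z) (q n1 (n2+1) y z) \<gamma>
      * fq s (q n1 n2 y z) (q (n1+1) (n2+1) y z) \<gamma>"
    and flow_z: "\<And>n1 n2 y z.
        (qz q n1 n2 y z + 1) / (qz q n1 n2 y z - 1) =
        fq s (q n1 n2 y z) (q (n1-1) n2 y z) (-2*\<gamma>) * fq s (q n1 n2 y z) (q n1 (n2-1) y z) \<gamma>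
      * fq s (q n1 n2 y z) (q (n1-1) (n2-1) y z) \<gamma>"
    and concl_defined:
      "fq_def_ok s (ured q j n y z) (ured q j (n+2) y z) (2*\<gamma>)
     \<and> fq_def_ok s (ured q j n y z) (ured q j (n-2) y z) (2*\<gamma>)
     \<and> fq_def_ok s (ured q j n y z) (ured q j (n+1) y z) (-\<gamma>)
     \<and> fq_def_ok s (ured q j n y z) (ured q j (n-1) y z) (-\<gamma>)
     \<and> fq s (ured q j n y z) (ured q j (n+2) y z) (2*\<gamma>) * fq s (ured q j n y z) (ured q j (n+1) y z) (-\<gamma>)
         * fq s (ured q j n y z) (ured q j (n-1) y z) (-\<gamma>) \<noteq> 1
     \<and> fq s (ured q j n y z) (ured q j (n+1) y z) (-\<gamma>) * fq s (ured q j n y z) (ured q j (n-1) y z) (-\<gamma>)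
         * fq s (ured q j n y z) (ured q j (n-2) y z) (2*\<gamma>) \<noteq> 1"
  shows "(vector_derivative (\<lambda>y'. ured q j n y' z) (at y)
          + vector_derivative (\<lambda>z'. ured q j n y z') (at z)) / 2
       = 1 / (fq s (ured q j n y z) (ured q j (n+2) y z) (2*\<gamma>) * fq s (ured q j n y z) (ured q j (n+1) y z) (-\<gamma>)
              * fq s (ured q j n y z) (ured q j (n-1) y z) (-\<gamma>) - 1)
       - 1 / (fq s (ured q j n y z) (ured q j (n+1) y z) (-\<gamma>) * fq s (ured q j n y z) (ured q j (n-1) y z) (-\<gamma>)
              * fq s (ured q j n y z) (ured q j (n-2) y z) (2*\<gamma>) - 1)"
proof -
  define U where "U = (\<lambda>m. ured q j m y z)"
  define A where "A = fq s (U n) (U (n+2)) (2*\<gamma>) * fq s (U n) (U (n+1)) (-\<gamma>) * fq s (U n) (U (n-1)) (-\<gamma>)"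
  define B where "B = fq s (U n) (U (n+1)) (-\<gamma>) * fq s (U n) (U (n-1)) (-\<gamma>) * fq s (U n) (U (n-2)) (2*\<gamma>)"
  define F where "F = (\<lambda>k l a b. fq s (q k l y z) (q (k+a) (l+b) y z))"
  show ?thesis
  proof (cases "even n")
    case True
    then obtain k where n: "n = 2*k" by blast
    have Un: "U n = q k j y z" "U (n+2) = q (k+1) j y z" "U (n+1) = q (k+1) (j+1) y z"
      "U (n-1) = q k (j+1) y z" "U (n-2) = q (k-1) j y z"
    proof -
      have "(2*k+1+1) div 2 = k+1" "(2*k+2) div 2 = k+1" "(2*k-1+1) div 2 = k" "(2*k-2) div 2 = k-1" by auto
      then show "U n = q k j y z" "U (n+2) = q (k+1) j y z" "U (n+1) = q (k+1) (j+1) y z"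
      "U (n-1) = q k (j+1) y z" "U (n-2) = q (k-1) j y z"
        unfolding U_def ured_def n by (simp_all del: div_mult_self1 div_mult_self2 add: add_ac)
    qed
    have dy: "vector_derivative (\<lambda>y'. ured q j n y' z) (at y) = qy q k j y z"
      unfolding ured_def qy_def using True n by simp
    have dz: "vector_derivative (\<lambda>z'. ured q j n y z') (at z) = qz q k j y z"
      unfolding ured_def qz_def using True n by simp
    have L: "F k j 1 0 (-2*\<gamma>) * F k j (-1) 0 (-2*\<gamma>) * F k j 0 1 \<gamma> * F k j 0 (-1) \<gamma>
       * F k j (-1) (-1) \<gamma> * F k j 1 1 \<gamma> = 1"
      using lattice[of k j y z] unfolding F_def by simp
    have Fy: "(qy q k j y z + 1)/(qy q k j y z - 1) = F k j (-1) 0 (-2*\<gamma>) * F k j 0 1 \<gamma> * F k j 1 1 \<gamma>"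
      using flow_y[of k j y z] unfolding F_def by simp
    have Fz: "(qz q k j y z + 1)/(qz q k j y z - 1) = F k j (-1) 0 (-2*\<gamma>) * F k j 0 (-1) \<gamma> * F k j (-1) (-1) \<gamma>"
      using flow_z[of k j y z] unfolding F_def by simp
    have AA: "A = 1 / (F k j 1 0 (-2*\<gamma>) * F k j 1 1 \<gamma> * F k j 0 1 \<gamma>)"
      unfolding A_def Un F_def by (simp only: fq_2g[of s _ _ \<gamma>] fq_mg[of s _ _ \<gamma>]) (simp add: field_simps)
    have BB: "B = 1 / (F k j 1 1 \<gamma> * F k j 0 1 \<gamma> * F k j (-1) 0 (-2*\<gamma>))"
      unfolding B_def Un F_def by (simp only: fq_2g[of s _ _ \<gamma>] fq_mg[of s _ _ \<gamma>]) (simp add: field_simps)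
    have nz: "F k j 1 0 (-2*\<gamma>) \<noteq> 0" "F k j (-1) 0 (-2*\<gamma>) \<noteq> 0" "F k j 0 1 \<gamma> \<noteq> 0"
      "F k j 0 (-1) \<gamma> \<noteq> 0" "F k j (-1) (-1) \<gamma> \<noteq> 0" "F k j 1 1 \<gamma> \<noteq> 0"
      using L by auto
    have r: "(qy q k j y z + qz q k j y z)/2 = 1/(A-1) - 1/(B-1)"
    proof (rule alg)
      show "qy q k j y z \<noteq> 1" "qz q k j y z \<noteq> 1" using defined[of k j y z] by auto
      show "(qy q k j y z + 1)/(qy q k j y z - 1) = F k j (-1) 0 (-2*\<gamma>) * F k j 0 1 \<gamma> * F k j 1 1 \<gamma>" by (rule Fy)
      show "(qz q k j y z + 1)/(qz q k j y z - 1) = F k j (-1) 0 (-2*\<gamma>) * F k j 0 (-1) \<gamma> * F k j (-1) (-1) \<gamma>" by (rule Fz)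
      show "F k j (-1) 0 (-2*\<gamma>) * F k j 0 1 \<gamma> * F k j 1 1 \<gamma> * B = 1"
        unfolding BB using nz by (simp add: field_simps)
      show "F k j (-1) 0 (-2*\<gamma>) * F k j 0 (-1) \<gamma> * F k j (-1) (-1) \<gamma> = A"
        unfolding AA using nz L by (simp add: field_simps)
    qed
    show ?thesis using r unfolding dy dz A_def B_def U_def .
  next
    case False
    have "\<exists>k. n = 2*k - 1" using False by presburger
    then obtain k where n: "n = 2*k - 1" by blast
    have Un: "U n = q k (j+1) y z" "U (n+2) = q (k+1) (j+1) y z" "U (n+1) = q k j y z"
      "U (n-1) = q (k-1) j y z" "U (n-2) = q (k-1) (j+1) y z"
      unfolding U_def ured_def n by auto (metis add.commute)
    have dy: "vector_derivative (\<lambda>y'. ured q j n y' z) (at y) = qy q k (j+1) y z"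
      unfolding ured_def qy_def using False n by simp
    have dz: "vector_derivative (\<lambda>z'. ured q j n y z') (at z) = qz q k (j+1) y z"
      unfolding ured_def qz_def using False n by simp
    define l where "l = j + 1"
    have jl: "j = l - 1" unfolding l_def by simp
    have L: "F k l 1 0 (-2*\<gamma>) * F k l (-1) 0 (-2*\<gamma>) * F k l 0 1 \<gamma> * F k l 0 (-1) \<gamma>
       * F k l (-1) (-1) \<gamma> * F k l 1 1 \<gamma> = 1"
      using lattice[of k l y z] unfolding F_def by simp
    have Fy: "(qy q k l y z + 1)/(qy q k l y z - 1) = F k l (-1) 0 (-2*\<gamma>) * F k l 0 1 \<gamma> * F k l 1 1 \<gamma>"
      using flow_y[of k l y z] unfolding F_def by simp
    have Fz: "(qz q k l y z + 1)/(qz q k l y z - 1) = F k l (-1) 0 (-2*\<gamma>) * F k l 0 (-1) \<gamma> * F k l (-1) (-1) \<gamma>"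
      using flow_z[of k l y z] unfolding F_def by simp
    have AA: "A = 1 / (F k l 1 0 (-2*\<gamma>) * F k l 0 (-1) \<gamma> * F k l (-1) (-1) \<gamma>)"
      unfolding A_def Un F_def l_def by (simp only: fq_2g[of s _ _ \<gamma>] fq_mg[of s _ _ \<gamma>]) (simp add: field_simps)
    have BB: "B = 1 / (F k l 0 (-1) \<gamma> * F k l (-1) (-1) \<gamma> * F k l (-1) 0 (-2*\<gamma>))"
      unfolding B_def Un F_def l_def by (simp only: fq_2g[of s _ _ \<gamma>] fq_mg[of s _ _ \<gamma>]) (simp add: field_simps)
    have nz: "F k l 1 0 (-2*\<gamma>) \<noteq> 0" "F k l (-1) 0 (-2*\<gamma>) \<noteq> 0" "F k l 0 1 \<gamma> \<noteq> 0"
      "F k l 0 (-1) \<gamma> \<noteq> 0" "F k l (-1) (-1) \<gamma> \<noteq> 0" "F k l 1 1 \<gamma> \<noteq> 0"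
      using L by auto
    have r: "(qy q k l y z + qz q k l y z)/2 = 1/(A-1) - 1/(B-1)"
    proof -
      have "(qz q k l y z + qy q k l y z)/2 = 1/(A-1) - 1/(B-1)"
      proof (rule alg)
        show "qz q k l y z \<noteq> 1" "qy q k l y z \<noteq> 1" using defined[of k l y z] by auto
        show "(qy q k l y z + 1)/(qy q k l y z - 1) = F k l (-1) 0 (-2*\<gamma>) * F k l 0 1 \<gamma> * F k l 1 1 \<gamma>" by (rule Fy)
        show "(qz q k l y z + 1)/(qz q k l y z - 1) = F k l (-1) 0 (-2*\<gamma>) * F k l 0 (-1) \<gamma> * F k l (-1) (-1) \<gamma>" by (rule Fz)
        show "F k l (-1) 0 (-2*\<gamma>) * F k l 0 (-1) \<gamma> * F k l (-1) (-1) \<gamma> * B = 1"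
          unfolding BB using nz by (simp add: field_simps)
        show "F k l (-1) 0 (-2*\<gamma>) * F k l 0 1 \<gamma> * F k l 1 1 \<gamma> = A"
          unfolding AA using nz L by (simp add: field_simps)
      qed
      then show ?thesis by (simp add: add.commute)
    qed
    show ?thesis using r unfolding dy dz A_def B_def U_def l_def .
  qed
qed

end
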